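(* Let $N\ge 1$, $g>0$, $h>0$, and $u_m,\alpha_1,\dots,\alpha_N\in\mathbb{R}$. Let $A_N\in\mathbb{R}^{(N+2)\times(N+2)}$ be the matrix $$A_N=\begin{pmatrix} 0&1&0&\cdots&0\\ gh-u_m^2-\sum_{i=1}^N\frac{\alpha_i^2}{2i+1} & 2u_m & \frac{2\alpha_1}{3} & \cdots & \frac{2\alpha_N}{2N+1}\\ -2u_m\alpha_1 & 2\alpha_1 & u_m & & \\ \vdots & \vdots & & \ddots & \\ -2u_m\alpha_N & 2\alpha_N & & & u_m \end{pmatrix},$$ where the lower-right $N\times N$ block is $u_m I_N$ and all unspecified entries are zero. Then $$\det(A_N-\lambda I)=(u_m-\lambda)^N\left[(\lambda-u_m)^2-gh-\sum_{i=1}^N\frac{3\alpha_i^2}{2i+1}\right],$$ so the eigenvalues of $A_N$ are $$\lambda_{1,2}=u_m\pm\sqrt{gh+\sum_{i=1}^N\frac{3\alpha_i^2}{2i+1}},\qquad \lambda_{i+2}=u_m\ (i=1,\dots,N).$$ Moreover, $A_N$ is diagonalizable over $\mathbb{R}$ (the eigenvalue $u_m$ has an $N$-dimensional eigenspace), so the system $\partial_t U + A_N(U)\partial_x U=0$ is hyperbolic whenever $h>0$.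
   Context: $A_N$ is the system matrix (flux Jacobian minus non-conservative matrix) of the Shallow Water Linearized Moment Equations (SWLME) without source terms, written in the variables $U=(h,hu_m,h\alpha_1,\dots,h\alpha_N)$, where $h$ is the water height, $u_m$ the mean horizontal velocity, $\alpha_i$ the coefficients of the velocity profile in scaled Legendre polynomials, and $g$ the gravitational constant. *)

theory Defs
  imports "Jordan_Normal_Form.Jordan_Normal_Form"
begin

text \<open>System matrix A_N of the SWLME, indices 0..N+1 (row/column 0 = h, 1 = h u_m,
  k+1 = h alpha_k for k = 1..N). alpha is indexed 1..N.\<close>
definition swlme_matrix :: "nat \<Rightarrow> real \<Rightarrow> real \<Rightarrow> real \<Rightarrow> (nat \<Rightarrow> real) \<Rightarrow> real mat" where
  "swlme_matrix N g h um alpha = mat (N+2) (N+2) (\<lambda>(r,c).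
     if r = 0 then (if c = 1 then 1 else 0)
     else if r = 1 then
       (if c = 0 then g*h - um^2 - (\<Sum>i=1..N. alpha i ^ 2 / (2 * real i + 1))
        else if c = 1 then 2*um
        else 2 * alpha (c-1) / (2 * real (c-1) + 1))
     else
       (if c = 0 then -2*um*alpha (r-1)
        else if c = 1 then 2 * alpha (r-1)
        else if c = r then um else 0))"

end

theory Submission
  imports Defs "Jordan_Normal_Form.Jordan_Normal_Form_Uniqueness"
begin


definition SS :: "nat \<Rightarrow> (nat \<Rightarrow> real) \<Rightarrow> real" where
  "SS N alpha = (\<Sum>i=1..N. alpha i ^ 2 / (2 * real i + 1))"

definition fA :: "nat \<Rightarrow> real \<Rightarrow> real \<Rightarrow> real \<Rightarrow> (nat \<Rightarrow> real) \<Rightarrow> nat \<Rightarrow> nat \<Rightarrow> real" where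
  "fA N g h um alpha r c = 
     (if r = 0 then (if c = 1 then 1 else 0)
     else if r = 1 then
       (if c = 0 then g*h - um^2 - (\<Sum>i=1..N. alpha i ^ 2 / (2 * real i + 1))
        else if c = 1 then 2*um
        else 2 * alpha (c-1) / (2 * real (c-1) + 1))
     else
       (if c = 0 then -2*um*alpha (r-1)
        else if c = 1 then 2 * alpha (r-1)
        else if c = r then um else 0))"

definition fP :: "real \<Rightarrow> real \<Rightarrow> real \<Rightarrow> (nat \<Rightarrow> real) \<Rightarrow> real \<Rightarrow> nat \<Rightarrow> nat \<Rightarrow> real" where
  "fP g h um alpha s r c =
  (if r = 0 then (if c \<le> 1 then 1 else 2 * alpha (c-1) / (2 * real (c-1) + 1))
  else if r = 1 then (if c = 0 then um + s else if c = 1 then um - s else um * (2 * alpha (c-1) / (2 * real (c-1) + 1)))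
  else if c \<le> 1 then 2 * alpha (r-1)
  else (if c = r then -(g*h) else 0) + alpha (r-1) * alpha (c-1) / (2 * real (c-1) + 1))"

definition fD :: "real \<Rightarrow> real \<Rightarrow> nat \<Rightarrow> real" where
  "fD um s c = (if c = 0 then um + s else if c = 1 then um - s else um)"

definition PP where "PP N g h um alpha s = mat (N+2) (N+2) (\<lambda>(r,c). fP g h um alpha s r c)"
definition DD where "DD N um s = mat (N+2) (N+2) (\<lambda>(r,c). if r = c then fD um s r else 0)"

lemma A_eq: "swlme_matrix N g h um alpha = mat (N+2) (N+2) (\<lambda>(r,c). fA N g h um alpha r c)"
  unfolding swlme_matrix_def fA_def by simp

lemma mult_entry: "A \<in> carrier_mat n m \<Longrightarrow> B \<in> carrier_mat m p \<Longrightarrow> i < n \<Longrightarrow> j < p \<Longrightarrow>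
   (A * B) $$ (i,j) = (\<Sum>k<m. A $$ (i,k) * B $$ (k,j))"
  by (auto simp: scalar_prod_def lessThan_atLeast0 intro!: sum.cong)

lemma sum_split2: fixes N :: nat and f :: "nat \<Rightarrow> 'a::comm_monoid_add" shows "(\<Sum>k<N+2. f k) = f 0 + f 1 + (\<Sum>j=1..N. f (j+1))"
proof -
  have "(\<Sum>k<Suc (Suc N). f k) = f 0 + (\<Sum>k<Suc N. f (Suc k))" by (rule sum.lessThan_Suc_shift)
  also have "(\<Sum>k<Suc N. f (Suc k)) = f 1 + (\<Sum>k<N. f (Suc (Suc k)))" by (subst sum.lessThan_Suc_shift) simp
  also have "(\<Sum>k<N. f (Suc (Suc k))) = (\<Sum>j=1..N. f (j+1))" using sum.atLeast1_atMost_eq[of "\<lambda>j. f (j+1)" N] by simp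
  finally show ?thesis by (simp only: add.assoc numeral_2_eq_2 add_Suc_right add_0_right)
qed

lemma AP_entry:
  assumes s2: "s^2 = g*h + 3 * SS N alpha" and r: "r < N+2" and c: "c < N+2"
  shows "(\<Sum>k<N+2. fA N g h um alpha r k * fP g h um alpha s k c) = fP g h um alpha s r c * fD um s c"
proof -
  let ?A = "fA N g h um alpha" and ?P = "fP g h um alpha s"
  have sumS: "(\<Sum>j=1..N. 2 * alpha j / (2 * real j + 1) * (2 * alpha j)) = 4 * SS N alpha"
    unfolding SS_def sum_distrib_left by (rule sum.cong) (auto simp: power2_eq_square)
  have sumS2: "(\<Sum>j=1..N. 2 * alpha j / (2 * real j + 1) * alpha j) = 2 * SS N alpha"
    unfolding SS_def sum_distrib_left by (rule sum.cong) (auto simp: power2_eq_square)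
  have cS: "(\<Sum>i=1..N. alpha i ^ 2 / (2 * real i + 1)) = SS N alpha" by (simp add: SS_def)
  show ?thesis
  proof (cases "r = 0")
    case True
    then show ?thesis unfolding sum_split2 by (simp add: fA_def fP_def fD_def)
  next
    case r0: False
    show ?thesis
    proof (cases "r = 1")
      case True
      have row: "(\<Sum>k<N+2. ?A r k * ?P k c) = ?A 1 0 * ?P 0 c + ?A 1 1 * ?P 1 c
          + (\<Sum>j=1..N. 2 * alpha j / (2 * real j + 1) * ?P (j+1) c)"
        unfolding sum_split2 True by (auto simp: fA_def intro!: sum.cong)
      show ?thesis
      proof (cases "c \<le> 1")
        case True
        have "(\<Sum>j=1..N. 2 * alpha j / (2 * real j + 1) * ?P (j+1) c) = 4 * SS N alpha"
          unfolding sumS[symmetric] using True by (auto simp: fP_def intro!: sum.cong)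
        then show ?thesis unfolding row using True `r = 1` s2 cS
          by (cases c) (auto simp: fA_def fP_def fD_def power2_eq_square algebra_simps)
      next
        case False
        then obtain c' where c': "c = c' + 1" "1 \<le> c'" "c' \<le> N" using c by (cases c) auto
        have "(\<Sum>j=1..N. 2 * alpha j / (2 * real j + 1) * ?P (j+1) c)
           = (\<Sum>j=1..N. (if j = c' then 2 * alpha j / (2 * real j + 1) * (-(g*h)) else 0)
               + 2 * alpha j / (2 * real j + 1) * alpha j * (alpha c' / (2 * real c' + 1)))"
        proof (intro sum.cong refl)
          fix j assume j: "j \<in> {1..N}"
          show "2 * alpha j / (2 * real j + 1) * ?P (j+1) c = (if j = c' then 2 * alpha j / (2 * real j + 1) * (-(g*h)) else 0)
               + 2 * alpha j / (2 * real j + 1) * alpha j * (alpha c' / (2 * real c' + 1))"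
          proof (cases "j = c'")
            case True
            have "2 * real c' + 1 \<noteq> 0" by simp
            then show ?thesis using c' True by (simp add: fP_def divide_simps) (simp add: algebra_simps)
          qed (use c' j in \<open>simp add: fP_def distrib_left mult.assoc\<close>)
        qed
        also have "\<dots> = 2 * alpha c' / (2 * real c' + 1) * (-(g*h)) + 2 * SS N alpha * (alpha c' / (2 * real c' + 1))"
        proof -
          have d1: "(\<Sum>j=1..N. if j = c' then 2 * alpha j / (2 * real j + 1) * (-(g*h)) else 0) = 2 * alpha c' / (2 * real c' + 1) * (-(g*h))"
            using c' by (simp only: sum.delta[OF finite_atLeastAtMost]) simp
          have d2: "(\<Sum>j=1..N. 2 * alpha j / (2 * real j + 1) * alpha j * (alpha c' / (2 * real c' + 1))) = 2 * SS N alpha * (alpha c' / (2 * real c' + 1))"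
            by (simp only: sum_distrib_right[symmetric] sumS2)
          show ?thesis by (simp only: sum.distrib d1 d2)
        qed
        finally have e: "(\<Sum>j=1..N. 2 * alpha j / (2 * real j + 1) * ?P (j+1) c) = 
           2 * alpha c' / (2 * real c' + 1) * (-(g*h)) + 2 * SS N alpha * (alpha c' / (2 * real c' + 1))" .
        have d: "2 * real c' + 1 \<noteq> 0" by simp
        show ?thesis unfolding row e using c' `r = 1` cS d
          by (simp add: fA_def fP_def fD_def power2_eq_square divide_simps) (simp add: algebra_simps)
      qed
    next
      case False
      then obtain r' where r': "r = r' + 1" "1 \<le> r'" "r' \<le> N" using r r0 by (cases r) auto
      have "(\<Sum>j=1..N. ?A r (j+1) * ?P (j+1) c) = (\<Sum>j=1..N. if j = r' then um * ?P (r'+1) c else 0)"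
        using r' by (intro sum.cong) (auto simp: fA_def)
      also have "\<dots> = um * ?P (r'+1) c" using r' by simp
      finally have e: "(\<Sum>j=1..N. ?A r (j+1) * ?P (j+1) c) = um * ?P (r'+1) c" .
      have a0: "?A r 0 = -2*um*alpha r'" "?A r 1 = 2 * alpha r'" using r' by (auto simp: fA_def)
      show ?thesis unfolding sum_split2 e a0 using r'
        by (cases "c \<le> 1"; cases "c = 0") (auto simp: fP_def fD_def algebra_simps)
    qed
  qed
qed

lemma SS_nonneg: "SS N alpha \<ge> 0"
  unfolding SS_def by (intro sum_nonneg) auto

lemma P_inj:
  assumes s: "s > 0" and gh: "g*h > 0" and v: "v \<in> carrier_vec (N+2)"
    and Pv: "\<And>i. i < N+2 \<Longrightarrow> (\<Sum>k<N+2. fP g h um alpha s i k * v $ k) = 0"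
  shows "v = 0\<^sub>v (N+2)"
proof -
  let ?P = "fP g h um alpha s"
  define T where "T = (\<Sum>j=1..N. 2 * alpha j / (2 * real j + 1) * v $ (j+1))"
  have r0: "v$0 + v$1 + T = 0"
    using Pv[of 0] unfolding sum_split2 T_def by (simp add: fP_def)
  have r1: "(um+s) * v$0 + (um-s) * v$1 + um * T = 0"
    using Pv[of 1] unfolding sum_split2 T_def by (simp add: fP_def sum_distrib_left mult.assoc)
  have x01: "v$0 = v$1" using r0 r1 s
    by (smt (verit, best) mult_cancel_left distrib_left distrib_right right_diff_distrib left_diff_distrib)
  have ri: "v$(i+1) = - 3 * alpha i * T / (2*g*h)" if i: "1 \<le> i" "i \<le> N" for i
  proof -
    have "(\<Sum>j=1..N. ?P (i+1) (j+1) * v $ (j+1)) = 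
       (\<Sum>j=1..N. (if j = i then -(g*h) * v$(i+1) else 0) + alpha i / 2 * (2 * alpha j / (2 * real j + 1) * v $ (j+1)))"
      using i by (intro sum.cong) (auto simp: fP_def field_simps)
    also have "\<dots> = -(g*h) * v$(i+1) + alpha i / 2 * T"
      using i unfolding T_def by (simp add: sum.distrib sum_distrib_left)
    finally have e: "(\<Sum>j=1..N. ?P (i+1) (j+1) * v $ (j+1)) = -(g*h) * v$(i+1) + alpha i / 2 * T" .
    have "2 * alpha i * (v$0 + v$1) + (-(g*h) * v$(i+1) + alpha i / 2 * T) = 0"
      using Pv[of "i+1"] i unfolding sum_split2 e by (simp add: fP_def algebra_simps)
    then have E: "(g*h) * v$(i+1) = 2 * alpha i * (v$0 + v$1) + alpha i / 2 * T" by (simp add: algebra_simps)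
    have s01: "v$0 + v$1 = -T" using r0 by linarith
    have "(g*h) * v$(i+1) = - 3 * alpha i * T / 2" unfolding E s01 by simp
    moreover have "g \<noteq> 0" "h \<noteq> 0" using gh by auto
    ultimately show ?thesis by (simp add: divide_simps) (simp add: algebra_simps)
  qed
  have "T = (\<Sum>j=1..N. 2 * alpha j / (2 * real j + 1) * v $ (j+1))" by (simp add: T_def)
  also have "\<dots> = (\<Sum>j=1..N. 2 * alpha j / (2 * real j + 1) * (- 3 * alpha j * T / (2*g*h)))"
    by (intro sum.cong refl) (simp only: ri atLeastAtMost_iff)
  also have "\<dots> = - 3 * T / (g*h) * SS N alpha"
    unfolding SS_def sum_distrib_left
  proof (intro sum.cong refl)
    fix x :: nat
    have "g \<noteq> 0" "h \<noteq> 0" "2 * real x + 1 \<noteq> 0" using gh by auto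
    then show "2 * alpha x / (2 * real x + 1) * (- 3 * alpha x * T / (2 * g * h)) = - 3 * T / (g * h) * (alpha x ^ 2 / (2 * real x + 1))"
      by (simp add: divide_simps power2_eq_square)
  qed
  finally have TT: "T = - 3 * T / (g*h) * SS N alpha" .
  have "g \<noteq> 0" "h \<noteq> 0" using gh by auto
  then have "T * (g*h) = -(T * (3 * SS N alpha))" using TT by (simp add: divide_simps)
  then have "T * (g*h + 3 * SS N alpha) = 0" by (simp add: distrib_left)
  moreover have "g*h + 3 * SS N alpha > 0" using gh SS_nonneg[of N alpha] by linarith
  ultimately have T0: "T = 0" by simp
  show ?thesis
  proof (rule eq_vecI)
    fix k assume "k < dim_vec (0\<^sub>v (N+2) :: real vec)"
    then have k: "k < N+2" by simp
    show "v $ k = 0\<^sub>v (N + 2) $ k"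
    proof (cases "k \<le> 1")
      case True then show ?thesis using r0 x01 T0 k by (cases k) auto
    next
      case False
      then obtain i where "k = i+1" "1 \<le> i" "i \<le> N" using k by (cases k) auto
      then show ?thesis using ri T0 by auto
    qed
  qed (use v in auto)
qed



lemma prod_split2: fixes N :: nat and f :: "nat \<Rightarrow> 'a::comm_monoid_mult" shows "(\<Prod>k<N+2. f k) = f 0 * f 1 * (\<Prod>j=1..N. f (j+1))"
proof -
  have "(\<Prod>k<Suc (Suc N). f k) = f 0 * (\<Prod>k<Suc N. f (Suc k))" by (rule prod.lessThan_Suc_shift)
  also have "(\<Prod>k<Suc N. f (Suc k)) = f 1 * (\<Prod>k<N. f (Suc (Suc k)))" by (subst prod.lessThan_Suc_shift) simp
  also have "(\<Prod>k<N. f (Suc (Suc k))) = (\<Prod>j=1..N. f (j+1))" using prod.atLeast1_atMost_eq[of "\<lambda>j. f (j+1)" N] by simp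
  finally show ?thesis by (simp only: mult.assoc numeral_2_eq_2 add_Suc_right add_0_right)
qed

theorem mainTheorem1:
  fixes N :: nat and g h um :: real and alpha :: "nat \<Rightarrow> real"
  assumes "N \<ge> 1" and "g > 0" and "h > 0"
  shows "(\<forall>lam::real. det (swlme_matrix N g h um alpha - lam \<cdot>\<^sub>m 1\<^sub>m (N+2))
            = (um - lam)^N * ((lam - um)^2 - g*h - (\<Sum>i=1..N. 3 * alpha i ^ 2 / (2 * real i + 1))))
    \<and> {lam. eigenvalue (swlme_matrix N g h um alpha) lam}
        = {um + sqrt (g*h + (\<Sum>i=1..N. 3 * alpha i ^ 2 / (2 * real i + 1))),
           um - sqrt (g*h + (\<Sum>i=1..N. 3 * alpha i ^ 2 / (2 * real i + 1))),
           um}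
    \<and> (\<exists>D. D \<in> carrier_mat (N+2) (N+2) \<and> diagonal_mat D \<and> similar_mat (swlme_matrix N g h um alpha) D)"
proof -
  define s where "s = sqrt (g*h + (\<Sum>i=1..N. 3 * alpha i ^ 2 / (2 * real i + 1)))"
  have sum3: "(\<Sum>i=1..N. 3 * alpha i ^ 2 / (2 * real i + 1)) = 3 * SS N alpha"
    by (simp add: SS_def sum_distrib_left)
  have gh: "g*h > 0" using assms by simp
  have Snn: "SS N alpha \<ge> 0" by (rule SS_nonneg)
  have s2: "s^2 = g*h + 3 * SS N alpha" unfolding s_def sum3 using Snn gh by simp
  have spos: "s > 0" unfolding s_def sum3 using Snn gh by simp
  define A where "A = swlme_matrix N g h um alpha"
  define P where "P = PP N g h um alpha s"
  define D where "D = DD N um s"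
  have A: "A \<in> carrier_mat (N+2) (N+2)" by (simp add: A_def swlme_matrix_def)
  have P: "P \<in> carrier_mat (N+2) (N+2)" by (simp add: P_def PP_def)
  have D: "D \<in> carrier_mat (N+2) (N+2)" by (simp add: D_def DD_def)
  have AP: "A * P = P * D"
  proof (rule eq_matI)
    fix i j assume "i < dim_row (P*D)" "j < dim_col (P*D)"
    then have i: "i < N+2" and j: "j < N+2" using P D by auto
    have "(A*P)$$(i,j) = (\<Sum>k<N+2. A$$(i,k) * P$$(k,j))" by (rule mult_entry[OF A P i j])
    also have "\<dots> = (\<Sum>k<N+2. fA N g h um alpha i k * fP g h um alpha s k j)"
      using i j by (intro sum.cong) (auto simp: A_def A_eq P_def PP_def)
    also have "\<dots> = fP g h um alpha s i j * fD um s j" by (rule AP_entry[OF s2 i j])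
    also have "\<dots> = (\<Sum>k<N+2. if k = j then fP g h um alpha s i j * fD um s j else 0)"
      using j by simp
    also have "\<dots> = (\<Sum>k<N+2. P$$(i,k) * D$$(k,j))"
      using i j by (intro sum.cong) (auto simp: D_def DD_def P_def PP_def)
    also have "\<dots> = (P*D)$$(i,j)" by (rule mult_entry[symmetric, OF P D i j])
    finally show "(A*P)$$(i,j) = (P*D)$$(i,j)" .
  qed (use A P D in auto)
  have dP: "det P \<noteq> 0"
  proof
    assume "det P = 0"
    then obtain v where v: "v \<in> carrier_vec (N+2)" "v \<noteq> 0\<^sub>v (N+2)" "P *\<^sub>v v = 0\<^sub>v (N+2)"
      using det_0_iff_vec_prod_zero[OF P] by auto
    have "v = 0\<^sub>v (N+2)"
    proof (rule P_inj[OF spos gh v(1)])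
      fix i assume i: "i < N+2"
      have "0 = (P *\<^sub>v v) $ i" using v(3) i by simp
      also have "\<dots> = (\<Sum>k<N+2. fP g h um alpha s i k * v $ k)"
        using i v(1) P by (auto simp: scalar_prod_def P_def PP_def lessThan_atLeast0 intro!: sum.cong)
      finally show "(\<Sum>k<N+2. fP g h um alpha s i k * v $ k) = 0" by simp
    qed
    with v(2) show False by simp
  qed
  from det_non_zero_imp_unit[OF P dP, of undefined]
  obtain Q where Q: "Q \<in> carrier_mat (N+2) (N+2)" and QP: "Q * P = 1\<^sub>m (N+2)" and PQ: "P * Q = 1\<^sub>m (N+2)"
    unfolding Units_def ring_mat_def by auto
  have "A = A * (P * Q)" using A by (simp add: PQ)
  also have "\<dots> = (A * P) * Q" using assoc_mult_mat[OF A P Q] by simp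
  finally have APDQ: "A = P * D * Q" unfolding AP .
  have wit: "similar_mat_wit A D P Q" by (rule similar_mat_witI[OF PQ QP APDQ A D P Q])
  have detc: "det (char_matrix A lam) = (um - lam)^N * ((lam - um)^2 - s^2)" for lam
  proof -
    have cw: "similar_mat_wit (char_matrix A lam) (char_matrix D lam) P Q"
      by (rule similar_mat_wit_char_matrix[OF wit])
    have cD: "char_matrix D lam \<in> carrier_mat (N+2) (N+2)" using D by simp
    have e: "char_matrix A lam = P * char_matrix D lam * Q"
      by (rule similar_mat_witD(3)[OF refl cw])
    have "det (char_matrix A lam) = det P * det (char_matrix D lam) * det Q"
      unfolding e using P cD Q by (simp add: det_mult[of _ "N+2"])
    also have "det P * det Q = 1" using det_mult[OF P Q] PQ by simp
    then have "det P * det (char_matrix D lam) * det Q = det (char_matrix D lam)"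
      by (simp add: algebra_simps)
    also have "det (char_matrix D lam) = prod_list (diag_mat (char_matrix D lam))"
      by (rule det_upper_triangular[OF _ cD]) (auto simp: upper_triangular_def D_def DD_def char_matrix_def)
    also have "\<dots> = (\<Prod>i<N+2. fD um s i - lam)"
      unfolding prod_list_diag_prod using cD
      by (auto simp: D_def DD_def char_matrix_def lessThan_atLeast0 intro!: prod.cong)
    also have "\<dots> = (um + s - lam) * (um - s - lam) * (um - lam)^N"
      unfolding prod_split2 by (simp add: fD_def)
    also have "\<dots> = (um - lam)^N * ((lam - um)^2 - s^2)"
      by (simp add: power2_eq_square algebra_simps)
    finally show ?thesis .
  qed
  have part1: "det (A - lam \<cdot>\<^sub>m 1\<^sub>m (N+2)) = (um - lam)^N * ((lam - um)^2 - g*h - 3 * SS N alpha)" for lam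
  proof -
    have "A - lam \<cdot>\<^sub>m 1\<^sub>m (N+2) = char_matrix A lam"
      using A by (intro eq_matI) (auto simp: char_matrix_def)
    then show ?thesis using detc[of lam] s2 by simp
  qed
  have part2i: "eigenvalue A lam \<longleftrightarrow> lam \<in> {um + s, um - s, um}" for lam
  proof -
    have "eigenvalue A lam \<longleftrightarrow> (um - lam)^N * ((lam - um)^2 - s^2) = 0"
      using eigenvalue_det[OF A] detc by simp
    also have "\<dots> \<longleftrightarrow> lam = um \<or> (lam - um)^2 = s^2" using assms(1) by auto
    also have "\<dots> \<longleftrightarrow> lam \<in> {um + s, um - s, um}"
      using spos by (auto simp: power2_eq_iff)
    finally show ?thesis .
  qed
  have part2: "{lam. eigenvalue A lam} = {um + s, um - s, um}"
    using part2i by blast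
  have part3: "D \<in> carrier_mat (N+2) (N+2) \<and> diagonal_mat D \<and> similar_mat A D"
    using D wit by (auto simp: diagonal_mat_def D_def DD_def similar_mat_def)
  show ?thesis using part1 part2 part3 unfolding A_def s_def sum3 by blast
qed

end
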